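(* Let $i,\ell\in\{0,\dots,r-2\}$, $k\in\mathbb Z$, and $P=\mathbb C^H_{kr}\otimes P_\ell$. Then any nonzero morphism $P_i\to P$ in $\mathcal C$ is equal to one of $$\lambda I_i+\mu x_i,\qquad \lambda\alpha_i^+,\qquad \lambda\alpha_i^-,$$ for some $\lambda,\mu\in\mathbb C$. Here the morphisms are uniquely determined by: - $I_i:P_i\to P_i$, $h_i\mapsto h_i$; - $x_i:P_i\to P_i$, $h_i\mapsto s_i$; - $\alpha_i^+:P_i\to\mathbb C^H_r\otimes P_{r-2-i}$, $h_i\mapsto 1\otimes L_{i-r}$; - $\alpha_i^-:P_i\to\mathbb C^H_{-r}\otimes P_{r-2-i}$, $h_i\mapsto [i]!^{-2}\,1\otimes R_{i+r}$.
   Context: Fix a positive integer $r$. Set $q=e^{\pi\sqrt{-1}/r}$, $q^x=e^{\pi\sqrt{-1}x/r}$, $\{x\}=q^x-q^{-x}$, $[x]=\{x\}/\{1\}$, $[n]!=[n][n-1]\cdots[1]$. $\overline U=\overline U_q^H\mathfrak{sl}(2)$ is the Hopf algebra over $\mathbb C$ generated by $E,F,K,K^{-1},H$ with: - relations $KK^{-1}=K^{-1}K=1$, $KEK^{-1}=q^2E$, $KFK^{-1}=q^{-2}F$, $EF-FE=\frac{K-K^{-1}}{q-q^{-1}}$, $HK=KH$, $[H,E]=2E$, $[H,F]=-2F$, $E^r=F^r=0$; - coproduct $\Delta(E)=1\otimes E+E\otimes K$, $\Delta(F)=K^{-1}\otimes F+F\otimes1$, $\Delta(K)=K\otimes K$,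 $\Delta(H)=H\otimes1+1\otimes H$. $\mathcal C$ is the category of finite-dimensional weight modules ($H$ diagonalizable, $K=q^\lambda$ on weight-$\lambda$ vectors). $\mathbb C^H_{kr}$ is the one-dimensional module with $E=F=0$ and $H=kr$. Definition of $P_i$, for $i\in\{0,\dots,r-2\}$ (write $j=r-2-i$ and $\gamma_{n,k}=[k][n-k+1]$). $P_i$ has basis $h_m$ ($m=i,i-2,\dots,-i$), $s_m$ ($m=i,\dots,-i$), $R_m$ ($m=r+j,\dots,r-j$), $L_m$ ($m=j-r,\dots,-j-r$), each of weight $m$, with: - $Fh_m=h_{m-2}$ ($m>-i$), $Fh_{-i}=L_{j-r}$; - $Fs_m=s_{m-2}$ ($m>-i$), $Fs_{-i}=0$; - $FL_m=L_{m-2}$ ($m>-j-r$), $FL_{-j-r}=0$; - $FR_{r-j}=s_i$, $FR_{r-j+2k}=-\gamma_{j,k}R_{r-j+2k-2}$ ($1\le k\le j$); - $Eh_i=R_{r-j}$, $Eh_{i-2k}=\gamma_{i,k}h_{i-2k+2}+s_{i-2k+2}$ ($1\le k\le i$); - $Es_i=0$, $Es_{i-2k}=\gamma_{i,k}s_{i-2k+2}$; - $ER_m=R_{m+2}$ ($m<r+j$), $ER_{r+j}=0$; - $EL_{j-r}=s_{-i}$, $EL_{j-2k-r}=-\gamma_{j,k}L_{j-2k-r+2}$ ($1\le k\le j$). In $P_{r-2-i}$, the vectors $L_{i-r}$ and $R_{i+r}$ are the basis vectors of those weights. *)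

theory Defs
  imports Complex_Main
begin

definition qn :: "nat \<Rightarrow> int \<Rightarrow> complex" where
  "qn r x = exp (complex_of_real pi * \<i> * of_int x / of_nat r)"

definition qbrace :: "nat \<Rightarrow> int \<Rightarrow> complex" where
  "qbrace r x = qn r x - qn r (- x)"

definition qint :: "nat \<Rightarrow> int \<Rightarrow> complex" where
  "qint r x = qbrace r x / qbrace r 1"

definition qfact :: "nat \<Rightarrow> int \<Rightarrow> complex" where
  "qfact r n = (\<Prod>m\<in>{1..n}. qint r m)"

definition gam :: "nat \<Rightarrow> int \<Rightarrow> int \<Rightarrow> complex" where
  "gam r n k = qint r k * qint r (n - k + 1)"

datatype pb = Hv int | Sv int | Rv int | Lv int

type_synonym vec = "pb \<Rightarrow> complex"

definition bv :: "pb \<Rightarrow> vec" where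
  "bv b = (\<lambda>c. if c = b then 1 else 0)"

definition smul :: "complex \<Rightarrow> vec \<Rightarrow> vec" where
  "smul a v = (\<lambda>c. a * v c)"

fun wt :: "pb \<Rightarrow> int" where
  "wt (Hv m) = m" | "wt (Sv m) = m" | "wt (Rv m) = m" | "wt (Lv m) = m"

record umod =
  carrier :: "vec set"
  opE :: "vec \<Rightarrow> vec"
  opF :: "vec \<Rightarrow> vec"
  opK :: "vec \<Rightarrow> vec"
  opH :: "vec \<Rightarrow> vec"

definition inBasis :: "nat \<Rightarrow> int \<Rightarrow> pb \<Rightarrow> bool" where
  "inBasis r i b = (let j = int r - 2 - i in case b of
      Hv m \<Rightarrow> - i \<le> m \<and> m \<le> i \<and> even (i - m)
    | Sv m \<Rightarrow> - i \<le> m \<and> m \<le> i \<and> even (i - m)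
    | Rv m \<Rightarrow> int r - j \<le> m \<and> m \<le> int r + j \<and> even (int r + j - m)
    | Lv m \<Rightarrow> - j - int r \<le> m \<and> m \<le> j - int r \<and> even (j - int r - m))"

definition Fb :: "nat \<Rightarrow> int \<Rightarrow> pb \<Rightarrow> vec" where
  "Fb r i b = (let j = int r - 2 - i in case b of
      Hv m \<Rightarrow> if m > - i then bv (Hv (m - 2)) else bv (Lv (j - int r))
    | Sv m \<Rightarrow> if m > - i then bv (Sv (m - 2)) else (\<lambda>_. 0)
    | Lv m \<Rightarrow> if m > - j - int r then bv (Lv (m - 2)) else (\<lambda>_. 0)
    | Rv m \<Rightarrow> if m = int r - j then bv (Sv i)
              else smul (- gam r j ((m - (int r - j)) div 2)) (bv (Rv (m - 2))))"

definition Eb :: "nat \<Rightarrow> int \<Rightarrow> pb \<Rightarrow> vec" where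
  "Eb r i b = (let j = int r - 2 - i in case b of
      Hv m \<Rightarrow> if m = i then bv (Rv (int r - j))
              else (\<lambda>c. gam r i ((i - m) div 2) * bv (Hv (m + 2)) c + bv (Sv (m + 2)) c)
    | Sv m \<Rightarrow> if m = i then (\<lambda>_. 0)
              else smul (gam r i ((i - m) div 2)) (bv (Sv (m + 2)))
    | Rv m \<Rightarrow> if m < int r + j then bv (Rv (m + 2)) else (\<lambda>_. 0)
    | Lv m \<Rightarrow> if m = j - int r then bv (Sv (- i))
              else smul (- gam r j ((j - int r - m) div 2)) (bv (Lv (m + 2))))"

definition extend :: "nat \<Rightarrow> int \<Rightarrow> (pb \<Rightarrow> vec) \<Rightarrow> vec \<Rightarrow> vec" where
  "extend r i g v = (\<lambda>c. \<Sum>b\<in>{b. inBasis r i b}. v b * g b c)"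

definition Pmod :: "nat \<Rightarrow> int \<Rightarrow> umod" where
  "Pmod r i = \<lparr> carrier = {v. \<forall>b. \<not> inBasis r i b \<longrightarrow> v b = 0},
               opE = extend r i (Eb r i),
               opF = extend r i (Fb r i),
               opK = (\<lambda>v c. qn r (wt c) * v c),
               opH = (\<lambda>v c. of_int (wt c) * v c) \<rparr>"

section \<open>Tensor product C^H_{kr} \<otimes> M, identifying 1 \<otimes> v with v\<close>

text \<open>On C^H_{kr}: E = F = 0, H = kr, K = q^{kr}, K^{-1} = q^{-kr}.
  Delta(E) = 1 \<otimes> E + E \<otimes> K gives E(1 \<otimes> v) = 1 \<otimes> Ev;
  Delta(F) = K^{-1} \<otimes> F + F \<otimes> 1 gives F(1 \<otimes> v) = q^{-kr} (1 \<otimes> Fv);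
  Delta(K) = K \<otimes> K, Delta(H) = H \<otimes> 1 + 1 \<otimes> H.\<close>
definition tensC :: "nat \<Rightarrow> int \<Rightarrow> umod \<Rightarrow> umod" where
  "tensC r k M = \<lparr> carrier = carrier M,
               opE = opE M,
               opF = (\<lambda>v. smul (qn r (- (k * int r))) (opF M v)),
               opK = (\<lambda>v. smul (qn r (k * int r)) (opK M v)),
               opH = (\<lambda>v c. of_int (k * int r) * v c + opH M v c) \<rparr>"

section \<open>Morphisms in C (extensional: zero outside the carrier)\<close>

definition hom :: "umod \<Rightarrow> umod \<Rightarrow> (vec \<Rightarrow> vec) \<Rightarrow> bool" where
  "hom M N f \<longleftrightarrow>
     (\<forall>v\<in>carrier M. f v \<in> carrier N) \<and>
     (\<forall>v. v \<notin> carrier M \<longrightarrow> f v = (\<lambda>_. 0)) \<and>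
     (\<forall>v\<in>carrier M. \<forall>w\<in>carrier M. \<forall>a b.
        f (\<lambda>c. a * v c + b * w c) = (\<lambda>c. a * f v c + b * f w c)) \<and>
     (\<forall>v\<in>carrier M. f (opE M v) = opE N (f v)) \<and>
     (\<forall>v\<in>carrier M. f (opF M v) = opF N (f v)) \<and>
     (\<forall>v\<in>carrier M. f (opK M v) = opK N (f v)) \<and>
     (\<forall>v\<in>carrier M. f (opH M v) = opH N (f v))"

definition Imor :: "nat \<Rightarrow> int \<Rightarrow> vec \<Rightarrow> vec" where
  "Imor r i = (THE f. hom (Pmod r i) (Pmod r i) f \<and> f (bv (Hv i)) = bv (Hv i))"

definition xmor :: "nat \<Rightarrow> int \<Rightarrow> vec \<Rightarrow> vec" where
  "xmor r i = (THE f. hom (Pmod r i) (Pmod r i) f \<and> f (bv (Hv i)) = bv (Sv i))"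

definition alpha_plus :: "nat \<Rightarrow> int \<Rightarrow> vec \<Rightarrow> vec" where
  "alpha_plus r i = (THE f. hom (Pmod r i) (tensC r 1 (Pmod r (int r - 2 - i))) f \<and>
                            f (bv (Hv i)) = bv (Lv (i - int r)))"

definition alpha_minus :: "nat \<Rightarrow> int \<Rightarrow> vec \<Rightarrow> vec" where
  "alpha_minus r i = (THE f. hom (Pmod r i) (tensC r (-1) (Pmod r (int r - 2 - i))) f \<and>
                            f (bv (Hv i)) = smul (inverse (qfact r i ^ 2)) (bv (Rv (i + int r))))"

end

theory Submission
  imports Defs
begin


lemma qn_cis: "qn r x = cis (pi * of_int x / of_nat r)"
  unfolding qn_def cis_conv_exp by (simp add: mult_ac)

lemma qbrace_nz:
  assumes "0 < x" "x < int r"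
  shows "qbrace r x \<noteq> 0"
proof
  assume h: "qbrace r x = 0"
  have "Im (qbrace r x) = 2 * sin (pi * of_int x / of_nat r)"
    unfolding qbrace_def qn_cis by simp
  with h have "sin (pi * of_int x / of_nat r) = 0" by simp
  moreover have "0 < pi * of_int x / of_nat r" using assms by simp
  moreover have "pi * of_int x / of_nat r < pi"
  proof -
    have "real_of_int x < real r" using assms by linarith
    hence "real_of_int x / real r < 1" using assms by simp
    hence "pi * (real_of_int x / real r) < pi * 1" by (intro mult_strict_left_mono) auto
    thus ?thesis by simp
  qed
  ultimately show False using sin_gt_zero by fastforce
qed

lemma qint_nz: "0 < x \<Longrightarrow> x < int r \<Longrightarrow> qint r x \<noteq> 0"
  unfolding qint_def using qbrace_nz[of x r] qbrace_nz[of 1 r] by simp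

lemma gam_nz: "1 \<le> k \<Longrightarrow> k \<le> n \<Longrightarrow> n \<le> int r - 2 \<Longrightarrow> gam r n k \<noteq> 0"
  unfolding gam_def by (simp add: qint_nz)

lemma qfact_nz: "0 \<le> n \<Longrightarrow> n \<le> int r - 2 \<Longrightarrow> qfact r n \<noteq> 0"
  unfolding qfact_def by (simp add: qint_nz)




abbreviation "BS r i \<equiv> {b. inBasis r i b}"

lemma finite_BS: "finite (BS r i)"
proof -
  have "BS r i \<subseteq> Hv ` {-i..i} \<union> Sv ` {-i..i} \<union> Rv ` {-(4*\<bar>i\<bar>+4*int r)..4*\<bar>i\<bar>+4*int r}
      \<union> Lv ` {-(4*\<bar>i\<bar>+4*int r)..4*\<bar>i\<bar>+4*int r}"
  proof
    fix b assume "b \<in> BS r i"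
    thus "b \<in> Hv ` {-i..i} \<union> Sv ` {-i..i} \<union> Rv ` {-(4*\<bar>i\<bar>+4*int r)..4*\<bar>i\<bar>+4*int r}
      \<union> Lv ` {-(4*\<bar>i\<bar>+4*int r)..4*\<bar>i\<bar>+4*int r}"
      by (cases b) (auto simp: inBasis_def Let_def image_iff)
  qed
  thus ?thesis by (rule finite_subset) auto
qed

lemma ext_bv: "inBasis r i x \<Longrightarrow> extend r i g (bv x) = g x"
proof (rule ext)
  fix c assume x: "inBasis r i x"
  have "extend r i g (bv x) c = (\<Sum>b\<in>BS r i. (if b = x then g b c else 0))"
    unfolding extend_def bv_def by (rule sum.cong) auto
  also have "\<dots> = g x c" using finite_BS[of r i] x by (simp add: sum.delta')
  finally show "extend r i g (bv x) c = g x c" .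
qed

lemma ext_bv0: "\<not> inBasis r i x \<Longrightarrow> extend r i g (bv x) = (\<lambda>_. 0)"
  unfolding extend_def bv_def by (rule ext, rule sum.neutral) auto

lemma ext_lin: "extend r i g (\<lambda>c. a * u c + b * v c) = (\<lambda>c. a * extend r i g u c + b * extend r i g v c)"
  unfolding extend_def by (simp add: algebra_simps sum.distrib sum_distrib_left)

lemma ext_smul: "extend r i g (smul a u) = smul a (extend r i g u)"
  unfolding extend_def smul_def by (simp add: algebra_simps sum_distrib_left)

lemma ext_zero: "extend r i g (\<lambda>_. 0) = (\<lambda>_. 0)"
  unfolding extend_def by simp




definition lin_mod :: "umod \<Rightarrow> bool" where
  "lin_mod N \<longleftrightarrow> (\<lambda>_. 0) \<in> carrier N \<and>
     (\<forall>x\<in>carrier N. \<forall>y\<in>carrier N. \<forall>a b. (\<lambda>c. a * x c + b * y c) \<in> carrier N) \<and>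
     (\<forall>x y a b. opE N (\<lambda>c. a * x c + b * y c) = (\<lambda>c. a * opE N x c + b * opE N y c)) \<and>
     (\<forall>x y a b. opF N (\<lambda>c. a * x c + b * y c) = (\<lambda>c. a * opF N x c + b * opF N y c)) \<and>
     (\<forall>x y a b. opK N (\<lambda>c. a * x c + b * y c) = (\<lambda>c. a * opK N x c + b * opK N y c)) \<and>
     (\<forall>x y a b. opH N (\<lambda>c. a * x c + b * y c) = (\<lambda>c. a * opH N x c + b * opH N y c))"

lemma lin_mod_P: "lin_mod (Pmod r l)"
  unfolding lin_mod_def Pmod_def by (simp add: ext_lin algebra_simps)

lemma lin_mod_T: "lin_mod M \<Longrightarrow> lin_mod (tensC r k M)"
  unfolding lin_mod_def tensC_def smul_def by (simp add: algebra_simps)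

lemma lin_op_zero:
  fixes op :: "vec \<Rightarrow> vec"
  assumes "\<forall>x y a b. op (\<lambda>c. a * x c + b * y c) = (\<lambda>c. a * op x c + b * op y c)"
  shows "op (\<lambda>_. 0) = (\<lambda>_. 0)"
proof -
  have h: "op (\<lambda>c. a * x c + b * y c) = (\<lambda>c. a * op x c + b * op y c)" for x y a b
    using assms by blast
  show ?thesis using h[of 0 "\<lambda>_. 0" 0 "\<lambda>_. 0"] by simp
qed

lemma hom_comb:
  assumes "hom M N g1" "hom M N g2" "lin_mod N"
  shows "hom M N (\<lambda>v c. a * g1 v c + b * g2 v c)"
proof -
  note L = assms(3)[unfolded lin_mod_def]
  have z: "opE N (\<lambda>_. 0) = (\<lambda>_. 0)" "opF N (\<lambda>_. 0) = (\<lambda>_. 0)" "opK N (\<lambda>_. 0) = (\<lambda>_. 0)" "opH N (\<lambda>_. 0) = (\<lambda>_. 0)"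
    using L by (auto intro: lin_op_zero)
  show ?thesis using assms(1,2) L unfolding hom_def
    by (auto simp: algebra_simps)
qed

lemma hom_zero: "lin_mod N \<Longrightarrow> hom M N (\<lambda>_ _. 0)"
proof -
  assume a: "lin_mod N"
  note L = a[unfolded lin_mod_def]
  have z: "opE N (\<lambda>_. 0) = (\<lambda>_. 0)" "opF N (\<lambda>_. 0) = (\<lambda>_. 0)" "opK N (\<lambda>_. 0) = (\<lambda>_. 0)" "opH N (\<lambda>_. 0) = (\<lambda>_. 0)"
    using L by (auto intro: lin_op_zero)
  show ?thesis using L z unfolding hom_def by auto
qed




lemma bv_carrier: "inBasis r i b \<Longrightarrow> bv b \<in> carrier (Pmod r i)"
  unfolding Pmod_def bv_def by auto

lemma opE_bv: "inBasis r i b \<Longrightarrow> opE (Pmod r i) (bv b) = Eb r i b"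
  unfolding Pmod_def by (simp add: ext_bv)

lemma opF_bv: "inBasis r i b \<Longrightarrow> opF (Pmod r i) (bv b) = Fb r i b"
  unfolding Pmod_def by (simp add: ext_bv)

lemma transF:
  assumes "hom (Pmod r i) N g" "hom (Pmod r i) N g'" "inBasis r i b"
    "g (bv b) = g' (bv b)" "Fb r i b = bv b'"
  shows "g (bv b') = g' (bv b')"
proof -
  have "g (opF (Pmod r i) (bv b)) = opF N (g (bv b))" "g' (opF (Pmod r i) (bv b)) = opF N (g' (bv b))"
    using assms(1,2) bv_carrier[OF assms(3)] unfolding hom_def by auto
  thus ?thesis using assms(3,4,5) by (simp add: opF_bv)
qed

lemma transE:
  assumes "hom (Pmod r i) N g" "hom (Pmod r i) N g'" "inBasis r i b"
    "g (bv b) = g' (bv b)" "Eb r i b = bv b'"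
  shows "g (bv b') = g' (bv b')"
proof -
  have "g (opE (Pmod r i) (bv b)) = opE N (g (bv b))" "g' (opE (Pmod r i) (bv b)) = opE N (g' (bv b))"
    using assms(1,2) bv_carrier[OF assms(3)] unfolding hom_def by auto
  thus ?thesis using assms(3,4,5) by (simp add: opE_bv)
qed

lemma hom_agree_basis:
  assumes g: "hom (Pmod r i) N g" and g': "hom (Pmod r i) N g'"
    and h: "g (bv (Hv i)) = g' (bv (Hv i))" and i: "0 \<le> i" "i \<le> int r - 2"
    and b: "inBasis r i b"
  shows "g (bv b) = g' (bv b)"
proof -
  define j where "j = int r - 2 - i"
  have j: "0 \<le> j" using i unfolding j_def by simp
  have H: "int n \<le> i \<Longrightarrow> g (bv (Hv (i - 2 * int n))) = g' (bv (Hv (i - 2 * int n)))" for n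
  proof (induction n)
    case 0 then show ?case using h by simp
  next
    case (Suc n)
    have "g (bv (Hv (i - 2 * int n - 2))) = g' (bv (Hv (i - 2 * int n - 2)))"
      by (rule transF[OF g g', of "Hv (i - 2 * int n)"])
        (use Suc in \<open>auto simp: inBasis_def Fb_def Let_def\<close>)
    then show ?case by (simp add: algebra_simps)
  qed
  have L0: "g (bv (Lv (j - int r))) = g' (bv (Lv (j - int r)))"
    by (rule transF[OF g g', of "Hv (-i)"]) (use H[of "nat i"] i in \<open>auto simp: inBasis_def Fb_def Let_def j_def\<close>)
  have L: "int n \<le> j \<Longrightarrow> g (bv (Lv (j - int r - 2 * int n))) = g' (bv (Lv (j - int r - 2 * int n)))" for n
  proof (induction n)
    case 0 then show ?case using L0 by simp
  next
    case (Suc n)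
    have "g (bv (Lv (j - int r - 2 * int n - 2))) = g' (bv (Lv (j - int r - 2 * int n - 2)))"
      by (rule transF[OF g g', of "Lv (j - int r - 2 * int n)"])
        (use Suc in \<open>auto simp: inBasis_def Fb_def Let_def j_def\<close>)
    then show ?case by (simp add: algebra_simps)
  qed
  have R0: "g (bv (Rv (int r - j))) = g' (bv (Rv (int r - j)))"
    by (rule transE[OF g g', of "Hv i"]) (use h i j in \<open>auto simp: inBasis_def Eb_def Let_def j_def\<close>)
  have R: "int n \<le> j \<Longrightarrow> g (bv (Rv (int r - j + 2 * int n))) = g' (bv (Rv (int r - j + 2 * int n)))" for n
  proof (induction n)
    case 0 then show ?case using R0 by simp
  next
    case (Suc n)
    have "g (bv (Rv (int r - j + 2 * int n + 2))) = g' (bv (Rv (int r - j + 2 * int n + 2)))"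
      by (rule transE[OF g g', of "Rv (int r - j + 2 * int n)"])
        (use Suc in \<open>auto simp: inBasis_def Eb_def Let_def j_def\<close>)
    then show ?case by (simp add: algebra_simps)
  qed
  have S0: "g (bv (Sv i)) = g' (bv (Sv i))"
    by (rule transF[OF g g', of "Rv (int r - j)"]) (use R0 i j in \<open>auto simp: inBasis_def Fb_def Let_def j_def\<close>)
  have S: "int n \<le> i \<Longrightarrow> g (bv (Sv (i - 2 * int n))) = g' (bv (Sv (i - 2 * int n)))" for n
  proof (induction n)
    case 0 then show ?case using S0 by simp
  next
    case (Suc n)
    have "g (bv (Sv (i - 2 * int n - 2))) = g' (bv (Sv (i - 2 * int n - 2)))"
      by (rule transF[OF g g', of "Sv (i - 2 * int n)"])
        (use Suc in \<open>auto simp: inBasis_def Fb_def Let_def\<close>)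
    then show ?case by (simp add: algebra_simps)
  qed
  show ?thesis
  proof (cases b)
    case (Hv m)
    with b have m: "-i \<le> m" "m \<le> i" "even (i - m)" by (auto simp: inBasis_def)
    have e: "i - 2 * int (nat ((i - m) div 2)) = m" using m by auto
    show ?thesis using H[of "nat ((i - m) div 2)"] m Hv e by simp
  next
    case (Sv m)
    with b have m: "-i \<le> m" "m \<le> i" "even (i - m)" by (auto simp: inBasis_def)
    have e: "i - 2 * int (nat ((i - m) div 2)) = m" using m by auto
    show ?thesis using S[of "nat ((i - m) div 2)"] m Sv e by simp
  next
    case (Rv m)
    with b have m: "int r - j \<le> m" "m \<le> int r + j" "even (int r + j - m)"
      by (auto simp: inBasis_def j_def Let_def)
    have e: "int r - j + 2 * int (nat ((m - (int r - j)) div 2)) = m" using m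
      by (auto simp: even_diff)
    show ?thesis using R[of "nat ((m - (int r - j)) div 2)"] m Rv e by simp
  next
    case (Lv m)
    with b have m: "- j - int r \<le> m" "m \<le> j - int r" "even (j - int r - m)"
      by (auto simp: inBasis_def j_def Let_def)
    have e: "j - int r - 2 * int (nat ((j - int r - m) div 2)) = m" using m by auto
    show ?thesis using L[of "nat ((j - int r - m) div 2)"] m Lv e by simp
  qed
qed




lemma hom_lin: "hom M N g \<Longrightarrow> v \<in> carrier M \<Longrightarrow> w \<in> carrier M \<Longrightarrow>
  g (\<lambda>c. a * v c + b * w c) = (\<lambda>c. a * g v c + b * g w c)"
  unfolding hom_def by blast

lemma hom_zero_val: "hom (Pmod r i) N g \<Longrightarrow> g (\<lambda>_. 0) = (\<lambda>_. 0)"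
proof -
  assume g: "hom (Pmod r i) N g"
  have z: "(\<lambda>_. 0) \<in> carrier (Pmod r i)" by (simp add: Pmod_def)
  have "g (\<lambda>c. 0 * (\<lambda>_. 0) c + 0 * (\<lambda>_. 0) c) = (\<lambda>c. 0 * g (\<lambda>_. 0) c + 0 * g (\<lambda>_. 0) c)"
    using hom_lin[OF g z z] .
  thus ?thesis by simp
qed

lemma hom_expand:
  assumes g: "hom (Pmod r i) N g" and v: "v \<in> carrier (Pmod r i)"
  shows "g v = (\<lambda>c. \<Sum>b\<in>BS r i. v b * g (bv b) c)"
proof -
  have gen: "finite S \<Longrightarrow> S \<subseteq> BS r i \<Longrightarrow> (\<lambda>c. \<Sum>b\<in>S. v b * bv b c) \<in> carrier (Pmod r i) \<and>
      g (\<lambda>c. \<Sum>b\<in>S. v b * bv b c) = (\<lambda>c. \<Sum>b\<in>S. v b * g (bv b) c)" for S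
  proof (induction S rule: finite_induct)
    case empty
    then show ?case using hom_zero_val[OF g] by (simp add: Pmod_def)
  next
    case (insert x S)
    have xb: "inBasis r i x" using insert by auto
    have e: "(\<lambda>c. \<Sum>b\<in>insert x S. v b * bv b c) = (\<lambda>c. 1 * (\<lambda>c. \<Sum>b\<in>S. v b * bv b c) c + v x * bv x c)"
      using insert by (simp add: add.commute)
    have cS: "(\<lambda>c. \<Sum>b\<in>S. v b * bv b c) \<in> carrier (Pmod r i)" 
      and gS: "g (\<lambda>c. \<Sum>b\<in>S. v b * bv b c) = (\<lambda>c. \<Sum>b\<in>S. v b * g (bv b) c)" using insert by auto
    have cx: "bv x \<in> carrier (Pmod r i)" using xb by (rule bv_carrier)
    have lin: "g (\<lambda>c. 1 * (\<lambda>c. \<Sum>b\<in>S. v b * bv b c) c + v x * bv x c) =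
        (\<lambda>c. 1 * g (\<lambda>c. \<Sum>b\<in>S. v b * bv b c) c + v x * g (bv x) c)"
      using hom_lin[OF g cS cx] .
    have car: "(\<lambda>c. 1 * (\<lambda>c. \<Sum>b\<in>S. v b * bv b c) c + v x * bv x c) \<in> carrier (Pmod r i)"
      using cS cx by (simp add: Pmod_def)
    show ?case unfolding e using lin car gS insert by (simp add: add.commute)
  qed
  have "v = (\<lambda>c. \<Sum>b\<in>BS r i. v b * bv b c)"
  proof (rule ext)
    fix c
    have "(\<Sum>b\<in>BS r i. v b * bv b c) = (\<Sum>b\<in>BS r i. if b = c then v c else 0)"
      by (rule sum.cong) (auto simp: bv_def)
    also have "\<dots> = v c" using finite_BS[of r i] v by (simp add: sum.delta Pmod_def)
    finally show "v c = (\<Sum>b\<in>BS r i. v b * bv b c)" by simp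
  qed
  then show ?thesis using gen[OF finite_BS subset_refl] by metis
qed

lemma hom_agree:
  assumes g: "hom (Pmod r i) N g" and g': "hom (Pmod r i) N g'"
    and h: "g (bv (Hv i)) = g' (bv (Hv i))" and i: "0 \<le> i" "i \<le> int r - 2"
  shows "g = g'"
proof (rule ext)
  fix v
  show "g v = g' v"
  proof (cases "v \<in> carrier (Pmod r i)")
    case True
    have "\<And>b. b \<in> BS r i \<Longrightarrow> g (bv b) = g' (bv b)" using hom_agree_basis[OF g g' h i] by auto
    then show ?thesis using hom_expand[OF g True] hom_expand[OF g' True] by (auto intro!: sum.cong)
  next
    case False
    then show ?thesis using g g' unfolding hom_def by auto
  qed
qed




lemma Eb_car: "inBasis r i b \<Longrightarrow> 0 \<le> i \<Longrightarrow> i \<le> int r - 2 \<Longrightarrow> \<not> inBasis r i c \<Longrightarrow> Eb r i b c = 0"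
  apply (cases b; cases c) 
  apply (auto simp: inBasis_def Eb_def Let_def bv_def smul_def)
  apply presburger+
  done

lemma Fb_car: "inBasis r i b \<Longrightarrow> 0 \<le> i \<Longrightarrow> i \<le> int r - 2 \<Longrightarrow> \<not> inBasis r i c \<Longrightarrow> Fb r i b c = 0"
  apply (cases b; cases c) 
  apply (auto simp: inBasis_def Fb_def Let_def bv_def smul_def)
  apply presburger+
  done

lemma ext_car:
  assumes "\<And>b c. inBasis r i b \<Longrightarrow> \<not> inBasis r i c \<Longrightarrow> g b c = 0"
  shows "extend r i g v \<in> carrier (Pmod r i)"
  using assms unfolding extend_def Pmod_def by auto

definition idM :: "nat \<Rightarrow> int \<Rightarrow> vec \<Rightarrow> vec" where
  "idM r i v = (if v \<in> carrier (Pmod r i) then v else (\<lambda>_. 0))"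

lemma idM_hom:
  assumes "0 \<le> i" "i \<le> int r - 2"
  shows "hom (Pmod r i) (Pmod r i) (idM r i)"
proof -
  have E: "opE (Pmod r i) v \<in> carrier (Pmod r i)" for v
    using ext_car[of r i "Eb r i" v] Eb_car assms by (simp add: Pmod_def)
  have F: "opF (Pmod r i) v \<in> carrier (Pmod r i)" for v
    using ext_car[of r i "Fb r i" v] Fb_car assms by (simp add: Pmod_def)
  have K: "v \<in> carrier (Pmod r i) \<Longrightarrow> opK (Pmod r i) v \<in> carrier (Pmod r i)" for v
    by (simp add: Pmod_def)
  have H: "v \<in> carrier (Pmod r i) \<Longrightarrow> opH (Pmod r i) v \<in> carrier (Pmod r i)" for v
    by (simp add: Pmod_def)
  have C: "v \<in> carrier (Pmod r i) \<Longrightarrow> w \<in> carrier (Pmod r i) \<Longrightarrow> (\<lambda>c. a * v c + b * w c) \<in> carrier (Pmod r i)" for v w a b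
    by (simp add: Pmod_def)
  show ?thesis unfolding hom_def
  proof (intro conjI ballI allI impI)
    fix v assume v: "v \<in> carrier (Pmod r i)"
    show "idM r i v \<in> carrier (Pmod r i)" using v by (simp add: idM_def)
    show "idM r i (opE (Pmod r i) v) = opE (Pmod r i) (idM r i v)" using v E by (simp add: idM_def)
    show "idM r i (opF (Pmod r i) v) = opF (Pmod r i) (idM r i v)" using v F by (simp add: idM_def)
    show "idM r i (opK (Pmod r i) v) = opK (Pmod r i) (idM r i v)" using v K by (simp add: idM_def)
    show "idM r i (opH (Pmod r i) v) = opH (Pmod r i) (idM r i v)" using v H by (simp add: idM_def)
    fix w a b assume w: "w \<in> carrier (Pmod r i)"
    show "idM r i (\<lambda>c. a * v c + b * w c) = (\<lambda>c. a * idM r i v c + b * idM r i w c)"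
      using v w C[OF v w] by (simp add: idM_def)
  next
    fix v assume "v \<notin> carrier (Pmod r i)"
    thus "idM r i v = (\<lambda>_. 0)" by (simp add: idM_def)
  qed
qed

lemma idM_h: "0 \<le> i \<Longrightarrow> idM r i (bv (Hv i)) = bv (Hv i)"
  using bv_carrier[of r i "Hv i"] by (simp add: idM_def inBasis_def)

lemma Imor_eq:
  assumes "0 \<le> i" "i \<le> int r - 2"
  shows "Imor r i = idM r i"
  unfolding Imor_def
proof (rule the_equality)
  show "hom (Pmod r i) (Pmod r i) (idM r i) \<and> idM r i (bv (Hv i)) = bv (Hv i)"
    using idM_hom[OF assms] idM_h assms(1) by blast
next
  fix g assume g: "hom (Pmod r i) (Pmod r i) g \<and> g (bv (Hv i)) = bv (Hv i)"
  show "g = idM r i"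
    by (rule hom_agree[OF conjunct1[OF g] idM_hom[OF assms] _ assms]) (simp add: g idM_h assms)
qed




definition lin2 :: "complex \<Rightarrow> pb \<Rightarrow> complex \<Rightarrow> pb \<Rightarrow> vec" where
  "lin2 x P y Q = (\<lambda>c. x * bv P c + y * bv Q c)"

lemma ext_lin2: "inBasis r l P \<Longrightarrow> inBasis r l Q \<Longrightarrow>
   extend r l g (lin2 x P y Q) = (\<lambda>c. x * g P c + y * g Q c)"
  unfolding lin2_def by (simp add: ext_lin ext_bv)

lemma E_HS:
  assumes "- l \<le> t" "t \<le> l - 2" "even (l - t)"
  shows "extend r l (Eb r l) (lin2 x (Hv t) y (Sv t)) =
     lin2 (x * gam r l ((l - t) div 2)) (Hv (t + 2)) (x + y * gam r l ((l - t) div 2)) (Sv (t + 2))"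
proof -
  have b: "inBasis r l (Hv t)" "inBasis r l (Sv t)" using assms by (auto simp: inBasis_def)
  show ?thesis unfolding ext_lin2[OF b] using assms
    by (auto simp: Eb_def lin2_def bv_def smul_def algebra_simps fun_eq_iff)
qed

lemma F_HS:
  assumes "- l < t" "t \<le> l" "even (l - t)"
  shows "extend r l (Fb r l) (lin2 x (Hv t) y (Sv t)) = lin2 x (Hv (t - 2)) y (Sv (t - 2))"
proof -
  have b: "inBasis r l (Hv t)" "inBasis r l (Sv t)" using assms by (auto simp: inBasis_def)
  show ?thesis unfolding ext_lin2[OF b] using assms
    by (auto simp: Fb_def lin2_def bv_def smul_def algebra_simps fun_eq_iff)
qed

lemma kill_HS:
  assumes l: "0 \<le> l" "l \<le> int r - 2" and t: "- l \<le> t" "t \<le> l - 2" "even (l - t)" and s: "\<sigma> \<noteq> 0"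
    and efe: "extend r l (Eb r l) (smul \<sigma> (extend r l (Fb r l) (extend r l (Eb r l) (lin2 a (Hv t) b (Sv t))))) = (\<lambda>_. 0)"
  shows "a = 0 \<and> b = 0"
proof -
  define \<gamma> where "\<gamma> = gam r l ((l - t) div 2)"
  have g: "\<gamma> \<noteq> 0" unfolding \<gamma>_def using t l by (intro gam_nz) auto
  have sm: "smul \<sigma> (lin2 x P y Q) = lin2 (\<sigma> * x) P (\<sigma> * y) Q" for x y P Q
    by (auto simp: smul_def lin2_def fun_eq_iff algebra_simps)
  have "extend r l (Eb r l) (smul \<sigma> (extend r l (Fb r l) (extend r l (Eb r l) (lin2 a (Hv t) b (Sv t)))))
     = lin2 (\<sigma> * (a * \<gamma>) * \<gamma>) (Hv (t + 2)) (\<sigma> * (a * \<gamma>) + \<sigma> * (a + b * \<gamma>) * \<gamma>) (Sv (t + 2))"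
    unfolding E_HS[OF t] F_HS[of l "t+2", simplified, OF _ _ _] 
    using t by (simp add: E_HS F_HS sm \<gamma>_def)
  with efe have z: "lin2 (\<sigma> * (a * \<gamma>) * \<gamma>) (Hv (t + 2)) (\<sigma> * (a * \<gamma>) + \<sigma> * (a + b * \<gamma>) * \<gamma>) (Sv (t + 2)) = (\<lambda>_. 0)"
    by simp
  have a: "\<sigma> * (a * \<gamma>) * \<gamma> = 0" using fun_cong[OF z, of "Hv (t+2)"] by (simp add: lin2_def bv_def)
  hence a0: "a = 0" using s g by simp
  have "\<sigma> * (a * \<gamma>) + \<sigma> * (a + b * \<gamma>) * \<gamma> = 0" using fun_cong[OF z, of "Sv (t+2)"] by (simp add: lin2_def bv_def)
  hence "b = 0" using a0 s g by simp
  with a0 show ?thesis by simp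
qed

lemma kill_R:
  assumes l: "0 \<le> l" "l \<le> int r - 2" and t: "l + 2 \<le> t" "t \<le> 2 * int r - 4 - l" "even (l - t)" and s: "\<sigma> \<noteq> 0"
    and efe: "extend r l (Eb r l) (smul \<sigma> (extend r l (Fb r l) (extend r l (Eb r l) (smul a (bv (Rv t)))))) = (\<lambda>_. 0)"
  shows "a = 0"
proof -
  define \<gamma> where "\<gamma> = gam r (int r - 2 - l) ((t - l) div 2)"
  have g: "\<gamma> \<noteq> 0" unfolding \<gamma>_def using t l by (intro gam_nz) auto
  have b1: "inBasis r l (Rv t)" "inBasis r l (Rv (t+2))" using t l by (auto simp: inBasis_def)
  have e1: "extend r l (Eb r l) (smul a (bv (Rv t))) = smul a (bv (Rv (t+2)))"
    using b1 t by (simp add: ext_smul ext_bv Eb_def)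
  have e2: "extend r l (Fb r l) (smul a (bv (Rv (t+2)))) = smul (- a * \<gamma>) (bv (Rv t))"
    using b1 t unfolding ext_smul ext_bv[OF b1(2)] by (auto simp: Fb_def \<gamma>_def smul_def fun_eq_iff)
  have e3: "extend r l (Eb r l) (smul \<sigma> (smul (- a * \<gamma>) (bv (Rv t)))) = smul (\<sigma> * (- a * \<gamma>)) (bv (Rv (t+2)))"
    using b1 t unfolding ext_smul ext_bv[OF b1(1)] by (auto simp: Eb_def smul_def fun_eq_iff)
  have "smul (\<sigma> * (- a * \<gamma>)) (bv (Rv (t+2))) = (\<lambda>_. 0)" using efe e1 e2 e3 by simp
  from fun_cong[OF this, of "Rv (t+2)"] have "\<sigma> * (- a * \<gamma>) = 0" by (simp add: smul_def bv_def)
  thus ?thesis using s g by simp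
qed

lemma kill_L:
  assumes l: "0 \<le> l" "l \<le> int r - 2" and t: "l + 2 - 2 * int r \<le> t" "t \<le> - l - 4" "even (l - t)" and s: "\<sigma> \<noteq> 0"
    and efe: "extend r l (Eb r l) (smul \<sigma> (extend r l (Fb r l) (extend r l (Eb r l) (smul a (bv (Lv t)))))) = (\<lambda>_. 0)"
  shows "a = 0"
proof -
  define \<gamma> where "\<gamma> = gam r (int r - 2 - l) ((- 2 - l - t) div 2)"
  have g: "\<gamma> \<noteq> 0" unfolding \<gamma>_def using t l by (intro gam_nz) auto
  have b1: "inBasis r l (Lv t)" "inBasis r l (Lv (t+2))" using t l by (auto simp: inBasis_def)
  have e1: "extend r l (Eb r l) (smul a (bv (Lv t))) = smul (- a * \<gamma>) (bv (Lv (t+2)))"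
    using b1 t unfolding ext_smul ext_bv[OF b1(1)] by (auto simp: Eb_def \<gamma>_def smul_def fun_eq_iff)
  have e2: "extend r l (Fb r l) (smul (- a * \<gamma>) (bv (Lv (t+2)))) = smul (- a * \<gamma>) (bv (Lv t))"
    using b1 t unfolding ext_smul ext_bv[OF b1(2)] by (auto simp: Fb_def smul_def fun_eq_iff)
  have e3: "extend r l (Eb r l) (smul \<sigma> (smul (- a * \<gamma>) (bv (Lv t)))) = smul (\<sigma> * (- a * \<gamma>) * (- \<gamma>)) (bv (Lv (t+2)))"
    using b1 t unfolding ext_smul ext_bv[OF b1(1)] by (auto simp: Eb_def \<gamma>_def smul_def fun_eq_iff)
  have "smul (\<sigma> * (- a * \<gamma>) * (- \<gamma>)) (bv (Lv (t+2))) = (\<lambda>_. 0)" using efe e1 e2 e3 by simp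
  from fun_cong[OF this, of "Lv (t+2)"] have "\<sigma> * (- a * \<gamma>) * (- \<gamma>) = 0" by (simp add: smul_def bv_def)
  thus ?thesis using s g by simp
qed




lemma classify:
  assumes l: "0 \<le> l" "l \<le> int r - 2"
    and wc: "\<forall>c. \<not> inBasis r l c \<longrightarrow> w c = 0"
    and ww: "\<forall>c. wt c \<noteq> t \<longrightarrow> w c = 0"
    and s: "\<sigma> \<noteq> 0"
    and efe: "extend r l (Eb r l) (smul \<sigma> (extend r l (Fb r l) (extend r l (Eb r l) w))) = (\<lambda>_. 0)"
  shows "(t = l \<and> w = lin2 (w (Hv t)) (Hv t) (w (Sv t)) (Sv t))
       \<or> (t = 2 * int r - 2 - l \<and> w = smul (w (Rv t)) (bv (Rv t)))
       \<or> (t = - l - 2 \<and> w = smul (w (Lv t)) (bv (Lv t)))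
       \<or> w = (\<lambda>_. 0)"
proof -
  have dec: "w = (\<lambda>c. w (Hv t) * bv (Hv t) c + w (Sv t) * bv (Sv t) c + w (Rv t) * bv (Rv t) c + w (Lv t) * bv (Lv t) c)"
  proof (rule ext)
    fix c show "w c = w (Hv t) * bv (Hv t) c + w (Sv t) * bv (Sv t) c + w (Rv t) * bv (Rv t) c + w (Lv t) * bv (Lv t) c"
      using ww by (cases c) (auto simp: bv_def)
  qed
  show ?thesis
  proof (cases "inBasis r l (Hv t)")
    case True
    hence t: "- l \<le> t" "t \<le> l" "even (l - t)" by (auto simp: inBasis_def)
    have "\<not> inBasis r l (Rv t)" "\<not> inBasis r l (Lv t)" using t by (auto simp: inBasis_def)
    hence "w (Rv t) = 0" "w (Lv t) = 0" using wc by auto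
    hence w2: "w = lin2 (w (Hv t)) (Hv t) (w (Sv t)) (Sv t)"
      using dec by (simp add: lin2_def)
    show ?thesis
    proof (cases "t = l")
      case True thus ?thesis using w2 by simp
    next
      case False
      hence "t \<le> l - 2" using t by presburger
      hence "w (Hv t) = 0 \<and> w (Sv t) = 0" using kill_HS[OF l t(1) _ t(3) s] efe w2 by metis
      hence "w = (\<lambda>_. 0)" using w2 by (simp add: lin2_def)
      thus ?thesis by simp
    qed
  next
    case nH: False
    hence nS: "\<not> inBasis r l (Sv t)" by (simp add: inBasis_def)
    have hz: "w (Hv t) = 0" "w (Sv t) = 0" using wc nH nS by auto
    show ?thesis
    proof (cases "inBasis r l (Rv t)")
      case True
      hence t0: "int r - (int r - 2 - l) \<le> t \<and> t \<le> int r + (int r - 2 - l) \<and> even (int r + (int r - 2 - l) - t)"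
        by (simp only: inBasis_def Let_def pb.case)
      have t: "l + 2 \<le> t" "t \<le> 2 * int r - 2 - l" "even (l - t)" using t0 by presburger+
      have "\<not> inBasis r l (Lv t)" using t l by (auto simp: inBasis_def)
      hence "w (Lv t) = 0" using wc by auto
      hence w1: "w = smul (w (Rv t)) (bv (Rv t))" using dec hz by (simp add: smul_def)
      show ?thesis
      proof (cases "t = 2 * int r - 2 - l")
        case True thus ?thesis using w1 by simp
      next
        case False
        hence "t \<le> 2 * int r - 4 - l" using t by presburger
        hence "w (Rv t) = 0" using kill_R[OF l t(1) _ t(3) s] efe w1 by metis
        thus ?thesis using w1 by (simp add: smul_def)
      qed
    next
      case nR: False
      have rz: "w (Rv t) = 0" using wc nR by auto
      show ?thesis
      proof (cases "inBasis r l (Lv t)")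
        case True
        hence t0: "- (int r - 2 - l) - int r \<le> t \<and> t \<le> (int r - 2 - l) - int r \<and> even ((int r - 2 - l) - int r - t)"
          by (simp only: inBasis_def Let_def pb.case)
        have t: "l + 2 - 2 * int r \<le> t" "t \<le> - l - 2" "even (l - t)" using t0 by presburger+
        have w1: "w = smul (w (Lv t)) (bv (Lv t))" using dec hz rz by (simp add: smul_def)
        show ?thesis
        proof (cases "t = - l - 2")
          case True thus ?thesis using w1 by simp
        next
          case False
          hence "t \<le> - l - 4" using t by presburger
          hence "w (Lv t) = 0" using kill_L[OF l t(1) _ t(3) s] efe w1 by metis
          thus ?thesis using w1 by (simp add: smul_def)
        qed
      next
        case False
        hence "w (Lv t) = 0" using wc by auto
        hence "w = (\<lambda>_. 0)" using dec hz rz by simp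
        thus ?thesis by simp
      qed
    qed
  qed
qed




lemma tens0: "tensC r 0 M = M"
  by (cases M) (simp add: tensC_def qn_def smul_def)

lemma kcases:
  assumes "0 < r"
  shows "k \<le> -2 \<Longrightarrow> k * int r \<le> -2 * int r" "k = -1 \<or> k = 0 \<or> k = 1 \<or> k \<le> -2 \<or> k \<ge> 2"
    "k \<ge> 2 \<Longrightarrow> k * int r \<ge> 2 * int r"
proof -
  show "k \<le> -2 \<Longrightarrow> k * int r \<le> -2 * int r" using mult_right_mono[of k "-2" "int r"] by simp
  show "k = -1 \<or> k = 0 \<or> k = 1 \<or> k \<le> -2 \<or> k \<ge> 2" by auto
  show "k \<ge> 2 \<Longrightarrow> k * int r \<ge> 2 * int r" using mult_right_mono[of 2 k "int r"] by simp
qed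

lemma k_window:
  assumes "0 < r" "(m - 1) * int r < k * int r" "k * int r < (m + 1) * int r"
  shows "k = m"
proof -
  have "m - 1 < k" using assms(1,2) by (simp add: mult_less_cancel_right)
  moreover have "k < m + 1" using assms(1,3) by (simp add: mult_less_cancel_right)
  ultimately show ?thesis by simp
qed

lemma k_window0: "0 < r \<Longrightarrow> - int r < k * int r \<Longrightarrow> k * int r < int r \<Longrightarrow> k = 0"
  using k_window[of r 0 k] by simp
lemma k_windowm: "0 < r \<Longrightarrow> - 2 * int r < k * int r \<Longrightarrow> k * int r < 0 \<Longrightarrow> k = -1"
  using k_window[of r "-1" k] by simp
lemma k_windowp: "0 < r \<Longrightarrow> 0 < k * int r \<Longrightarrow> k * int r < 2 * int r \<Longrightarrow> k = 1"
  using k_window[of r 1 k] by simp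

lemma sigma_nz: "qn r x \<noteq> 0"
  by (simp add: qn_def)

lemma hom_NE: "opE (tensC r k (Pmod r l)) = extend r l (Eb r l)"
  by (simp add: tensC_def Pmod_def)

lemma hom_NF: "opF (tensC r k (Pmod r l)) v = smul (qn r (- (k * int r))) (extend r l (Fb r l) v)"
  by (simp add: tensC_def Pmod_def)

lemma hom_NH: "opH (tensC r k (Pmod r l)) v = (\<lambda>c. of_int (k * int r) * v c + of_int (wt c) * v c)"
  by (simp add: tensC_def Pmod_def)

lemma carrier_N: "carrier (tensC r k (Pmod r l)) = {v. \<forall>b. \<not> inBasis r l b \<longrightarrow> v b = 0}"
  by (simp add: tensC_def Pmod_def)

theorem proposition7p1:
  fixes r :: nat and i l k :: int and f :: "vec \<Rightarrow> vec"
  assumes "0 < r"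
    and "0 \<le> i" "i \<le> int r - 2"
    and "0 \<le> l" "l \<le> int r - 2"
    and "hom (Pmod r i) (tensC r k (Pmod r l)) f"
    and "f \<noteq> (\<lambda>_. (\<lambda>_. 0))"
  shows "\<exists>lam mu :: complex.
           (k = 0 \<and> l = i \<and> f = (\<lambda>v c. lam * Imor r i v c + mu * xmor r i v c))
         \<or> (k = 1 \<and> l = int r - 2 - i \<and> f = (\<lambda>v. smul lam (alpha_plus r i v)))
         \<or> (k = -1 \<and> l = int r - 2 - i \<and> f = (\<lambda>v. smul lam (alpha_minus r i v)))"
proof -
  note r = assms(1) and i = assms(2,3) and l = assms(4,5) and f = assms(6) and fnz = assms(7)
  define N where "N = tensC r k (Pmod r l)"
  define w where "w = f (bv (Hv i))"
  define \<sigma> where "\<sigma> = qn r (- (k * int r))"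
  have linN: "lin_mod N" unfolding N_def by (intro lin_mod_T lin_mod_P)
  have hb: "inBasis r i (Hv i)" using i by (simp add: inBasis_def)
  have hc: "bv (Hv i) \<in> carrier (Pmod r i)" using hb by (rule bv_carrier)
  have wN: "w \<in> carrier N" using f hc unfolding w_def N_def hom_def by blast
  hence wc: "\<forall>c. \<not> inBasis r l c \<longrightarrow> w c = 0" unfolding N_def carrier_N by simp
  have ww: "\<forall>c. wt c \<noteq> i - k * int r \<longrightarrow> w c = 0"
  proof (intro allI impI)
    fix c assume nc: "wt c \<noteq> i - k * int r"
    have e1: "opH (Pmod r i) (bv (Hv i)) = (\<lambda>c. of_int i * bv (Hv i) c + 0 * bv (Hv i) c)"
      by (auto simp: Pmod_def bv_def fun_eq_iff)
    have "f (opH (Pmod r i) (bv (Hv i))) = opH N w" using f hc unfolding w_def N_def hom_def by blast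
    hence "(\<lambda>c. of_int i * w c + 0 * w c) = opH N w"
      unfolding e1 hom_lin[OF f hc hc] w_def .
    from fun_cong[OF this, of c] have "of_int i * w c = (of_int (k * int r) + of_int (wt c)) * w c"
      unfolding N_def hom_NH by (simp add: algebra_simps)
    hence "(of_int i - of_int (k * int r) - of_int (wt c)) * w c = 0" by (simp add: algebra_simps)
    moreover have "(of_int i - of_int (k * int r) - of_int (wt c) :: complex) \<noteq> 0"
    proof
      assume "(of_int i - of_int (k * int r) - of_int (wt c) :: complex) = 0"
      hence "(of_int (i - k * int r - wt c) :: complex) = 0" by simp
      hence "i - k * int r - wt c = 0" by (simp only: of_int_eq_0_iff)
      thus False using nc by simp
    qed
    ultimately show "w c = 0" by simp
  qed
  have rb: "inBasis r i (Rv (i + 2))" using i by (auto simp: inBasis_def)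
  have sb: "inBasis r i (Sv i)" using i by (simp add: inBasis_def)
  have s1: "opE (Pmod r i) (bv (Hv i)) = bv (Rv (i + 2))" using hb by (simp add: opE_bv Eb_def add.commute)
  have s2: "opF (Pmod r i) (bv (Rv (i + 2))) = bv (Sv i)" using rb by (simp add: opF_bv Fb_def)
  have s3: "opE (Pmod r i) (bv (Sv i)) = (\<lambda>_. 0)" using sb by (simp add: opE_bv Eb_def)
  have "f (bv (Rv (i + 2))) = opE N w" using f hc s1 unfolding w_def N_def hom_def by metis
  moreover have "f (bv (Sv i)) = opF N (f (bv (Rv (i + 2))))" using f bv_carrier[OF rb] s2 unfolding N_def hom_def by metis
  moreover have "f (\<lambda>_. 0) = opE N (f (bv (Sv i)))" using f bv_carrier[OF sb] s3 unfolding N_def hom_def by metis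
  ultimately have "opE N (opF N (opE N w)) = (\<lambda>_. 0)" using hom_zero_val[OF f] by simp
  hence efe: "extend r l (Eb r l) (smul \<sigma> (extend r l (Fb r l) (extend r l (Eb r l) w))) = (\<lambda>_. 0)"
    unfolding N_def hom_NE hom_NF \<sigma>_def .
  have snz: "\<sigma> \<noteq> 0" unfolding \<sigma>_def by (rule sigma_nz)
  have wnz: "w \<noteq> (\<lambda>_. 0)"
  proof
    assume "w = (\<lambda>_. 0)"
    hence "f = (\<lambda>_ _. 0)" using hom_agree[OF f hom_zero[OF linN[unfolded N_def]] _ i] unfolding w_def by simp
    thus False using fnz by simp
  qed
  have kc: "k = -1 \<or> k = 0 \<or> k = 1 \<or> k \<le> -2 \<or> k \<ge> 2" and
    km: "k \<le> -2 \<Longrightarrow> k * int r \<le> -2 * int r" and kp: "k \<ge> 2 \<Longrightarrow> k * int r \<ge> 2 * int r"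
    using kcases[OF r] by auto
  from classify[OF l wc ww snz efe] wnz show ?thesis
  proof (elim disjE conjE)
    assume t: "i - k * int r = l" and w2: "w = lin2 (w (Hv (i - k * int r))) (Hv (i - k * int r)) (w (Sv (i - k * int r))) (Sv (i - k * int r))"
    have k0: "k = 0" by (rule k_window0[OF r]) (use t i l in linarith)+
    have li: "l = i" using t k0 by simp
    define a where "a = w (Hv i)"
    define b where "b = w (Sv i)"
    have wab: "w = lin2 a (Hv i) b (Sv i)" using w2 k0 unfolding a_def b_def by simp
    have fM: "hom (Pmod r i) (Pmod r i) f" using f k0 li tens0 by simp
    have idh: "hom (Pmod r i) (Pmod r i) (idM r i)" by (rule idM_hom[OF i])
    have Ie: "Imor r i = idM r i" by (rule Imor_eq[OF i])
    show ?thesis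
    proof (cases "b = 0")
      case True
      have gh: "hom (Pmod r i) (Pmod r i) (\<lambda>v c. a * idM r i v c + 0 * idM r i v c)"
        by (rule hom_comb[OF idh idh lin_mod_P])
      have "f = (\<lambda>v c. a * idM r i v c + 0 * idM r i v c)"
        by (rule hom_agree[OF fM gh _ i]) (simp add: w_def[symmetric] wab True idM_h[OF i(1)] lin2_def)
      hence "f = (\<lambda>v c. a * Imor r i v c + 0 * xmor r i v c)" unfolding Ie by simp
      thus ?thesis using k0 li by blast
    next
      case False
      define g where "g = (\<lambda>v c. (1 / b) * f v c + (- a / b) * idM r i v c)"
      have gh: "hom (Pmod r i) (Pmod r i) g" unfolding g_def by (rule hom_comb[OF fM idh lin_mod_P])
      have gv: "g (bv (Hv i)) = bv (Sv i)"
        unfolding g_def w_def[symmetric] wab idM_h[OF i(1)] using False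
        by (auto simp: lin2_def bv_def fun_eq_iff field_simps)
      have xe: "xmor r i = g" unfolding xmor_def
      proof (rule the_equality)
        show "hom (Pmod r i) (Pmod r i) g \<and> g (bv (Hv i)) = bv (Sv i)" using gh gv by simp
      next
        fix g' assume "hom (Pmod r i) (Pmod r i) g' \<and> g' (bv (Hv i)) = bv (Sv i)"
        thus "g' = g" using hom_agree[OF _ gh _ i] gv by auto
      qed
      have "f = (\<lambda>v c. a * Imor r i v c + b * xmor r i v c)"
        unfolding Ie xe g_def using False by (auto simp: fun_eq_iff field_simps)
      thus ?thesis using k0 li by blast
    qed
  next
    assume t: "i - k * int r = 2 * int r - 2 - l" and w1: "w = smul (w (Rv (i - k * int r))) (bv (Rv (i - k * int r)))"
    have k0: "k = -1" by (rule k_windowm[OF r]) (use t i l in linarith)+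
    have li: "l = int r - 2 - i" using t k0 by simp
    define c where "c = w (Rv (i + int r))"
    have wc1: "w = smul c (bv (Rv (i + int r)))" using w1 k0 unfolding c_def by simp
    have cnz: "c \<noteq> 0" using wnz wc1 by (auto simp: smul_def fun_eq_iff)
    define d where "d = inverse (qfact r i ^ 2)"
    have dnz: "d \<noteq> 0" unfolding d_def using qfact_nz[OF i] by simp
    define N' where "N' = tensC r (-1) (Pmod r (int r - 2 - i))"
    have fN: "hom (Pmod r i) N' f" using f k0 li unfolding N'_def by simp
    have linN': "lin_mod N'" unfolding N'_def by (intro lin_mod_T lin_mod_P)
    define g where "g = (\<lambda>v c'. (d / c) * f v c' + 0 * f v c')"
    have gh: "hom (Pmod r i) N' g" unfolding g_def by (rule hom_comb[OF fN fN linN'])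
    have gv: "g (bv (Hv i)) = smul d (bv (Rv (i + int r)))"
      unfolding g_def w_def[symmetric] wc1 using cnz by (auto simp: smul_def fun_eq_iff)
    have ae: "alpha_minus r i = g" unfolding alpha_minus_def N'_def[symmetric] d_def[symmetric]
    proof (rule the_equality)
      show "hom (Pmod r i) N' g \<and> g (bv (Hv i)) = smul d (bv (Rv (i + int r)))" using gh gv by simp
    next
      fix g' assume "hom (Pmod r i) N' g' \<and> g' (bv (Hv i)) = smul d (bv (Rv (i + int r)))"
      thus "g' = g" using hom_agree[OF _ gh _ i] gv by auto
    qed
    have "f = (\<lambda>v. smul (c / d) (alpha_minus r i v))"
      unfolding ae g_def using cnz dnz by (auto simp: fun_eq_iff smul_def)
    thus ?thesis using k0 li by blast
  next
    assume t: "i - k * int r = - l - 2" and w1: "w = smul (w (Lv (i - k * int r))) (bv (Lv (i - k * int r)))"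
    have k0: "k = 1" by (rule k_windowp[OF r]) (use t i l in linarith)+
    have li: "l = int r - 2 - i" using t k0 by simp
    define c where "c = w (Lv (i - int r))"
    have wc1: "w = smul c (bv (Lv (i - int r)))" using w1 k0 unfolding c_def by simp
    have cnz: "c \<noteq> 0" using wnz wc1 by (auto simp: smul_def fun_eq_iff)
    define N' where "N' = tensC r 1 (Pmod r (int r - 2 - i))"
    have fN: "hom (Pmod r i) N' f" using f k0 li unfolding N'_def by simp
    have linN': "lin_mod N'" unfolding N'_def by (intro lin_mod_T lin_mod_P)
    define g where "g = (\<lambda>v c'. (1 / c) * f v c' + 0 * f v c')"
    have gh: "hom (Pmod r i) N' g" unfolding g_def by (rule hom_comb[OF fN fN linN'])
    have gv: "g (bv (Hv i)) = bv (Lv (i - int r))"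
      unfolding g_def w_def[symmetric] wc1 using cnz by (auto simp: smul_def fun_eq_iff bv_def)
    have ae: "alpha_plus r i = g" unfolding alpha_plus_def N'_def[symmetric]
    proof (rule the_equality)
      show "hom (Pmod r i) N' g \<and> g (bv (Hv i)) = bv (Lv (i - int r))" using gh gv by simp
    next
      fix g' assume "hom (Pmod r i) N' g' \<and> g' (bv (Hv i)) = bv (Lv (i - int r))"
      thus "g' = g" using hom_agree[OF _ gh _ i] gv by auto
    qed
    have "f = (\<lambda>v. smul c (alpha_plus r i v))"
      unfolding ae g_def using cnz by (auto simp: fun_eq_iff smul_def)
    thus ?thesis using k0 li by blast
  next
    assume "w = (\<lambda>_. 0)"
    with wnz show ?thesis by simp
  qed
qed


end
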